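(* Let $M$ be the allocation output by the online greedy algorithm on an instance of Model 1 and let $N$ be an optimal offline allocation. For a day $d_i$, let $X_i$ be the set of Type 2 agents that $N$ allocates on day $d_i$ and $Y_i$ the set of agents that $M$ allocates on day $d_i$. Then there exists an injective map $f:X_i\to Y_i$ such that whenever $f(a_p)=a_q$, we have $\alpha_p\le\alpha_q$.
   Context: Model 1: finite sets of agents $A$, categories $C$ and days $D=\{d_1,\dots,d_T\}$; each agent is eligible for a subset of categories; daily supply $s_i$ for day $d_i$; daily quota $q_{ik}$ for category $c_k$ on day $d_i$; each agent $a_j$ has a priority factor $\alpha_j>0$ and a set of available days; discount factor $\delta\in(0,1)$. An allocation maps each agent to a pair (eligible category, available day) or to $\emptyset$, with at most $q_{ik}$ agents getting $(c_k,d_i)$ and at most $s_i$ agents getting day $d_i$; agent $a_j$ allocated on day $d_i$ has utility $\alpha_j\delta^{i-1}$, and an optimal offline allocation maximizes total utility. The online greedy algorithm: on each day $d_i$, let $A_i$ be the agents available on $d_i$ not yet allocated; form the bipartite graph between $A_i$ and $C$ with an edge $(a_j,c_k)$ when $a_j$ is eligible for $c_k$, of weight $\alpha_j\delta^{i-1}$, agents of capacity $1$ and $c_k$ of capacity $q_{ik}$; compute a maximum-weight $b$-matching of size at most $s_i$ and allocate accordingly on day $d_i$. An agent allocated by $N$ is of Type 1 if $M$ allocates it on a strictly earlier day than $N$ does; every other agent allocated by $N$ is of Type 2. *)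

theory Defs
  imports Complex_Main
begin

text \<open>Model 1. Agents of type 'a (the finite set A), categories of type 'c (finite set C),
  days indexed by 1..T. elig a = categories agent a is eligible for, avail a = available days,
  s i = supply of day i, q i c = quota of category c on day i, alpha a = priority factor.
  An allocation is a map 'a => ('c * nat) option; Some (c,i) means (category c, day i),
  None means the empty allocation.\<close>

type_synonym ('a,'c) alloc = "'a \<Rightarrow> ('c \<times> nat) option"

definition valid_alloc ::
  "'a set \<Rightarrow> 'c set \<Rightarrow> nat \<Rightarrow> ('a \<Rightarrow> 'c set) \<Rightarrow> ('a \<Rightarrow> nat set)
   \<Rightarrow> (nat \<Rightarrow> nat) \<Rightarrow> (nat \<Rightarrow> 'c \<Rightarrow> nat) \<Rightarrow> ('a,'c) alloc \<Rightarrow> bool" where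
  "valid_alloc A C T elig avail s q X \<longleftrightarrow>
     (\<forall>a. X a \<noteq> None \<longrightarrow> a \<in> A) \<and>
     (\<forall>a c i. X a = Some (c, i) \<longrightarrow> c \<in> elig a \<and> c \<in> C \<and> i \<in> avail a \<and> i \<in> {1..T}) \<and>
     (\<forall>i c. card {a \<in> A. X a = Some (c, i)} \<le> q i c) \<and>
     (\<forall>i. card {a \<in> A. \<exists>c. X a = Some (c, i)} \<le> s i)"

definition utility :: "'a set \<Rightarrow> ('a \<Rightarrow> real) \<Rightarrow> real \<Rightarrow> ('a,'c) alloc \<Rightarrow> real" where
  "utility A alpha \<delta> X =
     (\<Sum>a\<in>A. case X a of None \<Rightarrow> 0 | Some (c, i) \<Rightarrow> alpha a * \<delta> ^ (i - 1))"

definition optimal_alloc ::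
  "'a set \<Rightarrow> 'c set \<Rightarrow> nat \<Rightarrow> ('a \<Rightarrow> 'c set) \<Rightarrow> ('a \<Rightarrow> nat set)
   \<Rightarrow> (nat \<Rightarrow> nat) \<Rightarrow> (nat \<Rightarrow> 'c \<Rightarrow> nat) \<Rightarrow> ('a \<Rightarrow> real) \<Rightarrow> real \<Rightarrow> ('a,'c) alloc \<Rightarrow> bool" where
  "optimal_alloc A C T elig avail s q alpha \<delta> N \<longleftrightarrow>
     valid_alloc A C T elig avail s q N \<and>
     (\<forall>N'. valid_alloc A C T elig avail s q N' \<longrightarrow>
        utility A alpha \<delta> N' \<le> utility A alpha \<delta> N)"

definition day_matching ::
  "'a set \<Rightarrow> 'c set \<Rightarrow> ('a \<Rightarrow> 'c set) \<Rightarrow> (nat \<Rightarrow> nat) \<Rightarrow> (nat \<Rightarrow> 'c \<Rightarrow> nat)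
   \<Rightarrow> nat \<Rightarrow> ('a \<Rightarrow> 'c option) \<Rightarrow> bool" where
  "day_matching Ai C elig s q i g \<longleftrightarrow>
     (\<forall>a c. g a = Some c \<longrightarrow> a \<in> Ai \<and> c \<in> C \<and> c \<in> elig a) \<and>
     (\<forall>c. card {a \<in> Ai. g a = Some c} \<le> q i c) \<and>
     card {a \<in> Ai. g a \<noteq> None} \<le> s i"

definition matching_weight ::
  "'a set \<Rightarrow> ('a \<Rightarrow> real) \<Rightarrow> real \<Rightarrow> nat \<Rightarrow> ('a \<Rightarrow> 'c option) \<Rightarrow> real" where
  "matching_weight Ai alpha \<delta> i g = (\<Sum>a\<in>Ai. if g a \<noteq> None then alpha a * \<delta> ^ (i - 1) else 0)"

definition remaining :: "'a set \<Rightarrow> ('a \<Rightarrow> nat set) \<Rightarrow> ('a,'c) alloc \<Rightarrow> nat \<Rightarrow> 'a set" where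
  "remaining A avail X i = {a \<in> A. i \<in> avail a \<and> \<not> (\<exists>c j. j < i \<and> X a = Some (c, j))}"

definition day_part :: "('a,'c) alloc \<Rightarrow> nat \<Rightarrow> 'a \<Rightarrow> 'c option" where
  "day_part X i a = (case X a of Some (c, j) \<Rightarrow> if j = i then Some c else None | None \<Rightarrow> None)"

text \<open>M is a possible output of the online greedy algorithm (any tie-breaking): on each day
  i in 1..T, the day-i part of M is a maximum-weight b-matching on the remaining agents, and
  M allocates nothing outside days 1..T.\<close>
definition greedy_output ::
  "'a set \<Rightarrow> 'c set \<Rightarrow> nat \<Rightarrow> ('a \<Rightarrow> 'c set) \<Rightarrow> ('a \<Rightarrow> nat set)
   \<Rightarrow> (nat \<Rightarrow> nat) \<Rightarrow> (nat \<Rightarrow> 'c \<Rightarrow> nat) \<Rightarrow> ('a \<Rightarrow> real) \<Rightarrow> real \<Rightarrow> ('a,'c) alloc \<Rightarrow> bool" where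
  "greedy_output A C T elig avail s q alpha \<delta> M \<longleftrightarrow>
     (\<forall>a c j. M a = Some (c, j) \<longrightarrow> j \<in> {1..T}) \<and>
     (\<forall>i\<in>{1..T}.
        let Ai = remaining A avail M i in
        day_matching Ai C elig s q i (day_part M i) \<and>
        (\<forall>g. day_matching Ai C elig s q i g \<longrightarrow>
             matching_weight Ai alpha \<delta> i g \<le> matching_weight Ai alpha \<delta> i (day_part M i)))"

definition type2_on_day :: "'a set \<Rightarrow> ('a,'c) alloc \<Rightarrow> ('a,'c) alloc \<Rightarrow> nat \<Rightarrow> 'a set" where
  "type2_on_day A M N i = {a \<in> A. (\<exists>c. N a = Some (c, i)) \<and>
       \<not> (\<exists>c' j. M a = Some (c', j) \<and> j < i)}"

definition allocated_on_day :: "'a set \<Rightarrow> ('a,'c) alloc \<Rightarrow> nat \<Rightarrow> 'a set" where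
  "allocated_on_day A X i = {a \<in> A. \<exists>c. X a = Some (c, i)}"

end

theory Submission
  imports Defs
begin

definition asg :: "('a \<Rightarrow> 'c \<Rightarrow> bool) \<Rightarrow> ('c \<Rightarrow> nat) \<Rightarrow> 'a set \<Rightarrow> ('a \<Rightarrow> 'c) \<Rightarrow> bool" where
  "asg E Q S g \<longleftrightarrow> (\<forall>a\<in>S. E a (g a)) \<and> (\<forall>c. card {a\<in>S. g a = c} \<le> Q c)"

lemma asg_mono: "finite S \<Longrightarrow> S' \<subseteq> S \<Longrightarrow> asg E Q S g \<Longrightarrow> asg E Q S' g"
  unfolding asg_def
proof (intro conjI allI ballI)
  fix c assume a: "finite S" "S' \<subseteq> S" "(\<forall>a\<in>S. E a (g a)) \<and> (\<forall>c. card {a \<in> S. g a = c} \<le> Q c)"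
  have "card {a \<in> S'. g a = c} \<le> card {a \<in> S. g a = c}"
    using a(1,2) by (intro card_mono[of "{a \<in> S. g a = c}"]) auto
  then show "card {a \<in> S'. g a = c} \<le> Q c" using a(3) by (meson order_trans)
qed auto

lemma asg_upd:
  assumes "finite S" "asg E Q S g" "E a c" "a \<notin> {x\<in>S. g x = c}" "card {x\<in>S. g x = c} < Q c"
  shows "asg E Q (insert a S) (g(a := c))"
  unfolding asg_def
proof (intro conjI allI ballI)
  fix x assume "x \<in> insert a S" then show "E x ((g(a := c)) x)" using assms unfolding asg_def by auto
next
  fix c'
  show "card {x \<in> insert a S. (g(a := c)) x = c'} \<le> Q c'"
  proof (cases "c' = c")
    case True
    then have "{x \<in> insert a S. (g(a := c)) x = c'} = insert a {x\<in>S. g x = c}" using assms(4) by auto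
    have "a \<notin> {x\<in>S. g x = c}" using assms(4) by blast
    moreover have "finite {x\<in>S. g x = c}" using assms(1) by auto
    ultimately have "card {x \<in> insert a S. (g(a := c)) x = c'} = Suc (card {x\<in>S. g x = c})"
      using \<open>{x \<in> insert a S. (g(a := c)) x = c'} = insert a {x\<in>S. g x = c}\<close> by simp
    then show ?thesis using assms(5) True by simp
  next
    case False
    then have "{x \<in> insert a S. (g(a := c)) x = c'} \<subseteq> {x\<in>S. g x = c'}" by auto
    then have "card {x \<in> insert a S. (g(a := c)) x = c'} \<le> card {x\<in>S. g x = c'}"
      using assms(1) by (intro card_mono) auto
    then show ?thesis using assms(2) unfolding asg_def by (meson order_trans)
  qed
qed

lemma asg_aug:
  assumes "finite I" "finite J" "asg E Q I gI" "asg E Q J gJ0" "card J < card I"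
  shows "\<exists>e\<in>I-J. \<exists>h. asg E Q (insert e J) h"
proof -
  have "\<forall>gJ. asg E Q J gJ \<longrightarrow> card {a\<in>I\<inter>J. gI a \<noteq> gJ a} = n \<longrightarrow> (\<exists>e\<in>I-J. \<exists>h. asg E Q (insert e J) h)" for n
  proof (induction n rule: less_induct)
    case (less n)
    show ?case
    proof (intro allI impI)
      fix gJ assume gJ: "asg E Q J gJ" and n: "card {a\<in>I\<inter>J. gI a \<noteq> gJ a} = n"
      define C0 where "C0 = gI ` I \<union> gJ ` J"
      have fC0: "finite C0" using assms C0_def by auto
      have cI: "card I = (\<Sum>c\<in>C0. card {a\<in>I. gI a = c})"
        using sum.group[OF assms(1) fC0, of gI "\<lambda>_. 1::nat"] C0_def by auto
      have cJ: "card J = (\<Sum>c\<in>C0. card {a\<in>J. gJ a = c})"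
        using sum.group[OF assms(2) fC0, of gJ "\<lambda>_. 1::nat"] C0_def by auto
      have "\<exists>c. card {a\<in>J. gJ a = c} < card {a\<in>I. gI a = c}"
      proof (rule ccontr)
        assume "\<not> (\<exists>c. card {a\<in>J. gJ a = c} < card {a\<in>I. gI a = c})"
        then have "\<forall>c. card {a\<in>I. gI a = c} \<le> card {a\<in>J. gJ a = c}" using not_less by blast
        then have "card I \<le> card J" unfolding cI cJ by (intro sum_mono) auto
        then show False using assms by simp
      qed
      then obtain c where c: "card {a\<in>J. gJ a = c} < card {a\<in>I. gI a = c}" by blast
      have "\<not> {a\<in>I. gI a = c} \<subseteq> {a\<in>J. gJ a = c}"
      proof
        assume "{a\<in>I. gI a = c} \<subseteq> {a\<in>J. gJ a = c}"
        then have "card {a\<in>I. gI a = c} \<le> card {a\<in>J. gJ a = c}"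
          using assms(2) by (intro card_mono) auto
        then show False using c by simp
      qed
      then obtain a where a: "a \<in> I" "gI a = c" "a \<notin> {x\<in>J. gJ x = c}" by blast
      have Ea: "E a c" using a assms(3) unfolding asg_def by auto
      have qc: "card {x\<in>J. gJ x = c} < Q c" using c assms(3) unfolding asg_def
        by (meson order_less_le_trans)
      have up: "asg E Q (insert a J) (gJ(a := c))" by (rule asg_upd[OF assms(2) gJ Ea a(3) qc])
      show "\<exists>e\<in>I-J. \<exists>h. asg E Q (insert e J) h"
      proof (cases "a \<in> J")
        case False
        then show ?thesis using up a by blast
      next
        case True
        then have up': "asg E Q J (gJ(a := c))" using up by (simp add: insert_absorb)
        have "{x\<in>I\<inter>J. gI x \<noteq> (gJ(a := c)) x} = {x\<in>I\<inter>J. gI x \<noteq> gJ x} - {a}"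
          using a by auto
        moreover have "a \<in> {x\<in>I\<inter>J. gI x \<noteq> gJ x}" using a True by auto
        moreover have "finite {x\<in>I\<inter>J. gI x \<noteq> gJ x}" using assms(1) by auto
        ultimately have "card {x\<in>I\<inter>J. gI x \<noteq> (gJ(a := c)) x} < n"
          using n by (metis card_Diff1_less)
        then show ?thesis using less.IH up' by blast
      qed
    qed
  qed
  then show ?thesis using assms(4) by blast
qed

lemma asg_extend:
  assumes "finite K" "finite Y" "asg E Q K gK" "asg E Q Y gY"
  shows "\<exists>K' g. K \<subseteq> K' \<and> K' \<subseteq> K \<union> Y \<and> card K' = max (card K) (card Y) \<and> asg E Q K' g"
  using assms
proof (induction "card Y - card K" arbitrary: K gK rule: less_induct)
  case less
  show ?case
  proof (cases "card Y \<le> card K")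
    case True
    then show ?thesis using less.prems by (intro exI[of _ K] exI[of _ gK]) auto
  next
    case False
    then obtain e h where e: "e \<in> Y - K" "asg E Q (insert e K) h"
      using asg_aug[OF less.prems(2,1,4,3)] by auto
    have ck: "card (insert e K) = Suc (card K)" using e less.prems by simp
    have lt: "card Y - card (insert e K) < card Y - card K" using ck False by simp
    have "\<exists>K' g. insert e K \<subseteq> K' \<and> K' \<subseteq> insert e K \<union> Y \<and>
        card K' = max (card (insert e K)) (card Y) \<and> asg E Q K' g"
      using less.hyps[OF lt] less.prems e by simp
    then obtain K' g where K': "insert e K \<subseteq> K'" "K' \<subseteq> insert e K \<union> Y"
        "card K' = max (card (insert e K)) (card Y)" "asg E Q K' g" by blast
    show ?thesis using K' ck False e by (intro exI[of _ K'] exI[of _ g]) auto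
  qed
qed

lemma inj_thresh:
  fixes \<alpha> :: "'a \<Rightarrow> real"
  assumes "finite X" "finite Y" "\<forall>t. card {x\<in>X. t \<le> \<alpha> x} \<le> card {y\<in>Y. t \<le> \<alpha> y}"
  shows "\<exists>f. inj_on f X \<and> f ` X \<subseteq> Y \<and> (\<forall>x\<in>X. \<alpha> x \<le> \<alpha> (f x))"
  using assms
proof (induction "card X" arbitrary: X Y rule: less_induct)
  case less
  show ?case
  proof (cases "X = {}")
    case True then show ?thesis by auto
  next
    case False
    have "Max (\<alpha> ` X) \<in> \<alpha> ` X" using False less.prems(1) by (intro Max_in) auto
    then obtain x where x1: "x \<in> X" "\<alpha> x = Max (\<alpha> ` X)" by auto
    have x: "x \<in> X" "\<forall>x'\<in>X. \<alpha> x' \<le> \<alpha> x"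
      using x1 less.prems(1) by auto
    have "x \<in> {x'\<in>X. \<alpha> x \<le> \<alpha> x'}" using x by auto
    moreover have "finite {x'\<in>X. \<alpha> x \<le> \<alpha> x'}" using less.prems(1) by auto
    ultimately have "1 \<le> card {x'\<in>X. \<alpha> x \<le> \<alpha> x'}"
      by (metis One_nat_def Suc_leI card_gt_0_iff empty_iff)
    then have "{y\<in>Y. \<alpha> x \<le> \<alpha> y} \<noteq> {}"
    proof (intro notI)
      assume o: "1 \<le> card {x'\<in>X. \<alpha> x \<le> \<alpha> x'}" and "{y\<in>Y. \<alpha> x \<le> \<alpha> y} = {}"
      then have "card {y\<in>Y. \<alpha> x \<le> \<alpha> y} = 0" by (simp only: card.empty)
      then show False using o less.prems(3)[rule_format, of "\<alpha> x"] by linarith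
    qed
    then obtain y where y: "y \<in> Y" "\<alpha> x \<le> \<alpha> y" by auto
    have th: "\<forall>t. card {x'\<in>X-{x}. t \<le> \<alpha> x'} \<le> card {y'\<in>Y-{y}. t \<le> \<alpha> y'}"
    proof
      fix t
      show "card {x'\<in>X-{x}. t \<le> \<alpha> x'} \<le> card {y'\<in>Y-{y}. t \<le> \<alpha> y'}"
      proof (cases "t \<le> \<alpha> x")
        case True
        have "{x'\<in>X-{x}. t \<le> \<alpha> x'} = {x'\<in>X. t \<le> \<alpha> x'} - {x}" by auto
        moreover have "{y'\<in>Y-{y}. t \<le> \<alpha> y'} = {y'\<in>Y. t \<le> \<alpha> y'} - {y}" by auto
        moreover have "x \<in> {x'\<in>X. t \<le> \<alpha> x'}" "y \<in> {y'\<in>Y. t \<le> \<alpha> y'}" using x y True by auto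
        moreover have "card {x'\<in>X. t \<le> \<alpha> x'} \<le> card {y'\<in>Y. t \<le> \<alpha> y'}" using less.prems(3) by blast
        ultimately show ?thesis using less.prems by (simp add: card_Diff_singleton diff_le_mono)
      next
        case False
        then have "{x'\<in>X-{x}. t \<le> \<alpha> x'} = {}" using x by force
        then have "card {x'\<in>X-{x}. t \<le> \<alpha> x'} = 0" by (simp only: card.empty)
        then show ?thesis by linarith
      qed
    qed
    have "card (X - {x}) < card X" using x(1) less.prems(1) by (metis card_Diff1_less)
    then obtain f where f: "inj_on f (X-{x})" "f ` (X-{x}) \<subseteq> Y-{y}" "\<forall>x'\<in>X-{x}. \<alpha> x' \<le> \<alpha> (f x')"
      using less.hyps[of "X-{x}" "Y-{y}"] less.prems th by auto
    show ?thesis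
    proof (intro exI[of _ "f(x := y)"] conjI)
      show "inj_on (f(x := y)) X"
        unfolding inj_on_def
      proof (intro ballI impI)
        fix u v assume u: "u \<in> X" and v: "v \<in> X" and e: "(f(x := y)) u = (f(x := y)) v"
        show "u = v"
        proof (cases "u = x"; cases "v = x")
          assume "u = x" "v \<noteq> x" then show ?thesis using e f(2) v by auto
        next
          assume "u \<noteq> x" "v = x" then show ?thesis using e f(2) u by auto
        next
          assume "u \<noteq> x" "v \<noteq> x" then show ?thesis using e f(1) u v unfolding inj_on_def by auto
        qed auto
      qed
      show "(f(x := y)) ` X \<subseteq> Y" using f y by auto
      show "\<forall>x'\<in>X. \<alpha> x' \<le> \<alpha> ((f(x := y)) x')" using f y by auto
    qed
  qed
qed


lemma mw_eq:
  assumes "finite Ai"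
  shows "matching_weight Ai alpha \<delta> i g = \<delta> ^ (i - 1) * sum alpha {a\<in>Ai. g a \<noteq> None}"
proof -
  have "\<delta> ^ (i - 1) * sum alpha {a\<in>Ai. g a \<noteq> None}
      = \<delta> ^ (i - 1) * (\<Sum>a\<in>Ai. if g a \<noteq> None then alpha a else 0)"
    by (simp only: sum.inter_filter[OF assms])
  also have "\<dots> = (\<Sum>a\<in>Ai. if g a \<noteq> None then alpha a * \<delta> ^ (i - 1) else 0)"
    by (subst sum_distrib_left) (rule sum.cong, auto)
  finally show ?thesis unfolding matching_weight_def by simp
qed

lemma mk_dm:
  assumes "finite Ai" "K \<subseteq> Ai" "asg (\<lambda>a c. c \<in> C \<and> c \<in> elig a) (q i) K g" "card K \<le> s i"
  shows "day_matching Ai C elig s q i (\<lambda>a. if a \<in> K then Some (g a) else None)"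
    and "{a\<in>Ai. (\<lambda>a. if a \<in> K then Some (g a) else None) a \<noteq> None} = K"
proof -
  show "{a\<in>Ai. (\<lambda>a. if a \<in> K then Some (g a) else None) a \<noteq> None} = K" using assms(2) by auto
  have "\<And>c. {a \<in> Ai. (if a \<in> K then Some (g a) else None) = Some c} = {a\<in>K. g a = c}"
    using assms(2) by auto
  moreover have "{a \<in> Ai. (if a \<in> K then Some (g a) else None) \<noteq> None} = K"
    using assms(2) by auto
  ultimately show "day_matching Ai C elig s q i (\<lambda>a. if a \<in> K then Some (g a) else None)"
    using assms unfolding day_matching_def asg_def
    by (auto split: if_splits)
qed

theorem lemma3:
  fixes A :: "'a set" and C :: "'c set" and T :: nat
    and elig :: "'a \<Rightarrow> 'c set" and avail :: "'a \<Rightarrow> nat set"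
    and s :: "nat \<Rightarrow> nat" and q :: "nat \<Rightarrow> 'c \<Rightarrow> nat"
    and alpha :: "'a \<Rightarrow> real" and \<delta> :: real
    and M N :: "('a,'c) alloc" and i :: nat
  assumes "finite A" and "finite C"
    and "\<forall>a\<in>A. elig a \<subseteq> C" and "\<forall>a\<in>A. avail a \<subseteq> {1..T}"
    and "\<forall>a\<in>A. alpha a > 0" and "0 < \<delta>" and "\<delta> < 1"
    and "greedy_output A C T elig avail s q alpha \<delta> M"
    and "optimal_alloc A C T elig avail s q alpha \<delta> N"
    and "i \<in> {1..T}"
  shows "\<exists>f. inj_on f (type2_on_day A M N i) \<and>
             f ` (type2_on_day A M N i) \<subseteq> allocated_on_day A M i \<and>
             (\<forall>a\<in>type2_on_day A M N i. alpha a \<le> alpha (f a))"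
proof -
  define Ai where "Ai = remaining A avail M i"
  define E where "E = (\<lambda>a c. c \<in> C \<and> c \<in> elig a)"
  define X where "X = type2_on_day A M N i"
  define Y where "Y = allocated_on_day A M i"
  have dm: "day_matching Ai C elig s q i (day_part M i)"
    and opt: "\<And>g. day_matching Ai C elig s q i g \<Longrightarrow>
             matching_weight Ai alpha \<delta> i g \<le> matching_weight Ai alpha \<delta> i (day_part M i)"
    using assms(8,10) unfolding greedy_output_def Ai_def Let_def by auto
  have vN: "valid_alloc A C T elig avail s q N" using assms(9) unfolding optimal_alloc_def by auto
  have fA: "finite Ai" using assms(1) unfolding Ai_def remaining_def by auto
  have XA: "X \<subseteq> Ai"
  proof
    fix a assume "a \<in> X"
    then obtain c where "a \<in> A" "N a = Some (c, i)" "\<not> (\<exists>c' j. M a = Some (c', j) \<and> j < i)"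
      unfolding X_def type2_on_day_def by auto
    then show "a \<in> Ai" using vN unfolding Ai_def remaining_def valid_alloc_def by blast
  qed
  have dpi: "\<And>a. day_part M i a \<noteq> None \<longleftrightarrow> (\<exists>c. M a = Some (c, i))"
    unfolding day_part_def by (auto split: option.splits prod.splits if_splits)
  have Yeq: "Y = {a\<in>Ai. day_part M i a \<noteq> None}"
  proof
    show "{a\<in>Ai. day_part M i a \<noteq> None} \<subseteq> Y"
      using dpi unfolding Y_def allocated_on_day_def Ai_def remaining_def by auto
    show "Y \<subseteq> {a\<in>Ai. day_part M i a \<noteq> None}"
    proof
      fix a assume "a \<in> Y"
      then have "day_part M i a \<noteq> None" using dpi unfolding Y_def allocated_on_day_def by auto
      moreover then have "a \<in> Ai" using dm unfolding day_matching_def by auto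
      ultimately show "a \<in> {a\<in>Ai. day_part M i a \<noteq> None}" by auto
    qed
  qed
  have fX: "finite X" using XA fA finite_subset by auto
  have fY: "finite Y" using Yeq fA by auto
  have YA: "Y \<subseteq> Ai" using Yeq by auto
  define gX where "gX = (\<lambda>a. fst (the (N a)))"
  have XN: "\<And>a. a \<in> X \<Longrightarrow> N a = Some (gX a, i)"
    unfolding X_def type2_on_day_def gX_def by auto
  have asgX: "asg E (q i) X gX"
    unfolding asg_def
  proof (intro conjI allI ballI)
    fix a assume "a \<in> X"
    then show "E a (gX a)" using XN[of a] vN unfolding valid_alloc_def E_def by blast
  next
    fix c
    have "{a \<in> X. gX a = c} \<subseteq> {a \<in> A. N a = Some (c, i)}"
      using XN unfolding X_def type2_on_day_def by auto
    then have "card {a \<in> X. gX a = c} \<le> card {a \<in> A. N a = Some (c, i)}"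
      using assms(1) by (intro card_mono) auto
    then show "card {a \<in> X. gX a = c} \<le> q i c" using vN unfolding valid_alloc_def
      by (meson order_trans)
  qed
  have cX: "card X \<le> s i"
  proof -
    have "X \<subseteq> {a \<in> A. \<exists>c. N a = Some (c, i)}" using XN unfolding X_def type2_on_day_def by auto
    then have "card X \<le> card {a \<in> A. \<exists>c. N a = Some (c, i)}"
      using assms(1) by (intro card_mono) auto
    then show ?thesis using vN unfolding valid_alloc_def by (meson order_trans)
  qed
  define gY where "gY = (\<lambda>a. the (day_part M i a))"
  have asgY: "asg E (q i) Y gY"
    unfolding asg_def
  proof (intro conjI allI ballI)
    fix a assume "a \<in> Y"
    then have "day_part M i a = Some (gY a)" using Yeq gY_def by auto
    then show "E a (gY a)" using dm unfolding day_matching_def E_def by blast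
  next
    fix c
    have "{a \<in> Y. gY a = c} = {a \<in> Ai. day_part M i a = Some c}"
      using Yeq gY_def by auto
    then show "card {a \<in> Y. gY a = c} \<le> q i c" using dm unfolding day_matching_def by simp
  qed
  have cY: "card Y \<le> s i" using dm Yeq unfolding day_matching_def by simp
  have wY: "matching_weight Ai alpha \<delta> i (day_part M i) = \<delta> ^ (i - 1) * sum alpha Y"
    using mw_eq[OF fA] Yeq by simp
  have dpos: "0 < \<delta> ^ (i - 1)" using assms(6) by simp
  have apos: "\<And>a. a \<in> Ai \<Longrightarrow> 0 < alpha a" using assms(5) unfolding Ai_def remaining_def by auto
  have thr: "\<forall>t. card {x\<in>X. t \<le> alpha x} \<le> card {y\<in>Y. t \<le> alpha y}"
  proof (rule allI, rule ccontr)
    fix t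
    define Xt where "Xt = {x\<in>X. t \<le> alpha x}"
    define Yt where "Yt = {y\<in>Y. t \<le> alpha y}"
    assume "\<not> card {x\<in>X. t \<le> alpha x} \<le> card {y\<in>Y. t \<le> alpha y}"
    then have lt: "card Yt < card Xt" unfolding Xt_def Yt_def by simp
    have fXt: "finite Xt" "Xt \<subseteq> X" using fX unfolding Xt_def by auto
    have fYt: "finite Yt" "Yt \<subseteq> Y" using fY unfolding Yt_def by auto
    obtain e h where e: "e \<in> Xt - Yt" "asg E (q i) (insert e Yt) h"
      using asg_aug[OF fXt(1) fYt(1) asg_mono[OF fX fXt(2) asgX] asg_mono[OF fY fYt(2) asgY] lt]
      by blast
    have te: "t \<le> alpha e" using e unfolding Xt_def by auto
    have eY: "e \<notin> Y" using e te unfolding Yt_def by auto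
    define K where "K = insert e Yt"
    have fK: "finite K" using fYt K_def by auto
    have cK: "card K = Suc (card Yt)" using e fYt K_def by simp
    obtain K' g where K': "K \<subseteq> K'" "K' \<subseteq> K \<union> Y" "card K' = max (card K) (card Y)"
        "asg E (q i) K' g"
      using asg_extend[OF fK fY e(2)[folded K_def] asgY] by blast
    have KA: "K' \<subseteq> Ai" using K' K_def e fXt XA fYt YA by blast
    have "card Xt \<le> card X" using fX fXt by (intro card_mono) auto
    then have cK': "card K' \<le> s i" using K' cK lt cX cY by linarith
    have fK': "finite K'" using KA fA finite_subset by auto
    have "matching_weight Ai alpha \<delta> i (\<lambda>a. if a \<in> K' then Some (g a) else None)
          \<le> matching_weight Ai alpha \<delta> i (day_part M i)"
      using opt mk_dm(1)[where Ai=Ai and K=K' and C=C and elig=elig and q=q and i=i and g=g and s=s, OF fA KA K'(4)[unfolded E_def] cK'] by blast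
    moreover have "matching_weight Ai alpha \<delta> i (\<lambda>a. if a \<in> K' then Some (g a) else None)
       = \<delta> ^ (i - 1) * sum alpha K'"
      unfolding mw_eq[OF fA] mk_dm(2)[where Ai=Ai and K=K' and C=C and elig=elig and q=q and i=i and g=g and s=s, OF fA KA K'(4)[unfolded E_def] cK'] ..
    ultimately have "\<delta> ^ (i - 1) * sum alpha K' \<le> \<delta> ^ (i - 1) * sum alpha Y"
      using wY by simp
    then have le: "sum alpha K' \<le> sum alpha Y" using dpos by simp
    define Z where "Z = K' - K"
    define D where "D = Y - Yt - Z"
    have fZ: "finite Z" using fK' Z_def by auto
    have fD: "finite D" using fY D_def by auto
    have K'eq: "K' = K \<union> Z" "K \<inter> Z = {}" using K' Z_def by auto
    have ZY: "Z \<subseteq> Y - Yt" using K' Z_def K_def by auto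
    have Yeq2: "Y = Yt \<union> (Z \<union> D)" "Yt \<inter> (Z \<union> D) = {}" "Z \<inter> D = {}"
      using ZY fYt D_def by auto
    have sK': "sum alpha K' = sum alpha Yt + alpha e + sum alpha Z"
    proof -
      have "sum alpha K' = sum alpha K + sum alpha Z"
        using K'eq fK fZ by (simp add: sum.union_disjoint)
      moreover have "sum alpha K = alpha e + sum alpha Yt"
        using K_def e fYt by simp
      ultimately show ?thesis by simp
    qed
    have sY: "sum alpha Y = sum alpha Yt + sum alpha Z + sum alpha D"
      using Yeq2 fYt fZ fD by (simp add: sum.union_disjoint)
    have ckK': "card K' = card Yt + 1 + card Z"
      using K'eq fK fZ cK by (simp add: card_Un_disjoint)
    have ckY: "card Y = card Yt + card Z + card D"
      using Yeq2 fYt fZ fD by (simp add: card_Un_disjoint)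
    have "card D \<le> 1" using ckK' ckY K'(3) by linarith
    have sD: "sum alpha D < alpha e"
    proof (cases "D = {}")
      case True
      then show ?thesis using apos e fXt XA by auto
    next
      case False
      then obtain y where y: "y \<in> D" by auto
      then have "D = {y}" using \<open>card D \<le> 1\<close> fD card_le_Suc0_iff_eq[OF fD] by auto
      moreover have "alpha y < t" using y D_def Yt_def by auto
      ultimately show ?thesis using te by simp
    qed
    show False using le sK' sY sD by linarith
  qed
  obtain f where "inj_on f X" "f ` X \<subseteq> Y" "\<forall>x\<in>X. alpha x \<le> alpha (f x)"
    using inj_thresh[OF fX fY thr] by blast
  then show ?thesis unfolding X_def Y_def by blast
qed

end
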